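(* Let $\Omega\subset\mathbb{R}^n$ be open and let $p\in L^2(\Omega)$ be harmonic in $\Omega$. Then for every $\phi\in C^\infty_c(\Omega)$ and every $m\in\mathbb{N}$, $$\int_\Omega|\nabla^mp|^2\phi\,dx=\frac1{2^m}\int_\Omega p^2\,\Delta^m\phi\,dx,$$ where $|\nabla^mp|^2=\sum_{i_1,\dots,i_m=1}^n|\partial_{i_1}\cdots\partial_{i_m}p|^2$. *)

theory Defs
  imports "HOL-Analysis.Analysis"
begin

definition partial :: "'n::finite \<Rightarrow> (real^'n \<Rightarrow> real) \<Rightarrow> real^'n \<Rightarrow> real" where
  "partial i f x = deriv (\<lambda>t. f (x + t *\<^sub>R axis i 1)) 0"

fun dpart :: "'n::finite list \<Rightarrow> (real^'n \<Rightarrow> real) \<Rightarrow> real^'n \<Rightarrow> real" where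
  "dpart [] f = f"
| "dpart (i # is) f = partial i (dpart is f)"

definition grad_sq :: "nat \<Rightarrow> (real^'n::finite \<Rightarrow> real) \<Rightarrow> real^'n \<Rightarrow> real" where
  "grad_sq m f x = (\<Sum>is\<in>{is. length is = m}. (dpart is f x)\<^sup>2)"

definition lap :: "(real^'n::finite \<Rightarrow> real) \<Rightarrow> real^'n \<Rightarrow> real" where
  "lap f x = (\<Sum>i\<in>UNIV. partial i (partial i f) x)"

text \<open>C^infinity on an open set: every iterated partial derivative is (Frechet)
  differentiable on the set (hence all partials exist and are continuous).\<close>
definition smooth_on :: "(real^'n::finite) set \<Rightarrow> (real^'n \<Rightarrow> real) \<Rightarrow> bool" where
  "smooth_on S f \<longleftrightarrow> (\<forall>is. dpart is f differentiable_on S)"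

definition harmonic_on :: "(real^'n::finite) set \<Rightarrow> (real^'n \<Rightarrow> real) \<Rightarrow> bool" where
  "harmonic_on S f \<longleftrightarrow> smooth_on S f \<and> (\<forall>x\<in>S. lap f x = 0)"

definition L2_on :: "(real^'n::finite) set \<Rightarrow> (real^'n \<Rightarrow> real) \<Rightarrow> bool" where
  "L2_on S f \<longleftrightarrow> set_borel_measurable lborel S f \<and> set_integrable lborel S (\<lambda>x. (f x)\<^sup>2)"

definition test_function :: "(real^'n::finite) set \<Rightarrow> (real^'n \<Rightarrow> real) \<Rightarrow> bool" where
  "test_function S \<phi> \<longleftrightarrow> smooth_on S \<phi> \<and> compact (closure {x. \<phi> x \<noteq> 0})
     \<and> closure {x. \<phi> x \<noteq> 0} \<subseteq> S"

end

theory Submission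
  imports Defs
begin

abbreviation e :: "'n::finite \<Rightarrow> real^'n" where "e i \<equiv> axis i 1"

lemma line_deriv:
  fixes f :: "real^'n::finite \<Rightarrow> real"
  assumes "(f has_derivative f') (at (x + s *\<^sub>R v))"
  shows "((\<lambda>t. f (x + t *\<^sub>R v)) has_real_derivative f' v) (at s)"
proof -
  have l: "((\<lambda>t. x + t *\<^sub>R v) has_derivative (\<lambda>t. t *\<^sub>R v)) (at s)"
    by (auto intro!: derivative_eq_intros)
  have "((\<lambda>t. f (x + t *\<^sub>R v)) has_derivative (\<lambda>t. f' (t *\<^sub>R v))) (at s)"
    using has_derivative_compose[OF l assms] by (simp add: o_def)
  moreover have "(\<lambda>t. f' (t *\<^sub>R v)) = (*) (f' v)"
    using has_derivative_bounded_linear[OF assms]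
    by (auto simp: fun_eq_iff linear_simps bounded_linear.linear)
  ultimately show ?thesis by (simp add: has_field_derivative_def)
qed

lemma partial_eqI:
  assumes "(f has_derivative f') (at x)" "f' (e i) = D"
  shows "partial i f x = D"
proof -
  have "((\<lambda>t. f (x + t *\<^sub>R e i)) has_real_derivative f' (e i)) (at 0)"
    by (rule line_deriv) (use assms in simp)
  then show ?thesis unfolding partial_def using assms(2) by (simp add: DERIV_imp_deriv)
qed

lemma partial_frechet:
  assumes "f differentiable (at x)"
  shows "partial i f x = frechet_derivative f (at x) (e i)"
  using assms frechet_derivative_works partial_eqI by blast

lemma has_derivative_partial:
  assumes "f differentiable (at x)"
  shows "(f has_derivative frechet_derivative f (at x)) (at x)"
  using assms frechet_derivative_works by blast

lemma line_deriv_partial: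
  fixes f :: "real^'n::finite \<Rightarrow> real"
  assumes "f differentiable (at (x + s *\<^sub>R e i))"
  shows "((\<lambda>t. f (x + t *\<^sub>R e i)) has_real_derivative partial i f (x + s *\<^sub>R e i)) (at s)"
  using line_deriv[OF has_derivative_partial[OF assms]] partial_frechet[OF assms] by simp

lemma partial_local:
  assumes "open S" "x \<in> S" "\<And>y. y \<in> S \<Longrightarrow> f y = g y"
  shows "partial i f x = partial i g x"
proof -
  obtain r where r: "r > 0" "ball x r \<subseteq> S" using assms openE by blast
  have "eventually (\<lambda>t. f (x + t *\<^sub>R e i) = g (x + t *\<^sub>R e i)) (nhds 0)"
    unfolding eventually_nhds_metric
  proof (intro exI[of _ r] conjI allI impI)
    fix t :: real assume "dist t 0 < r"
    then have "x + t *\<^sub>R e i \<in> ball x r" by (simp add: dist_norm)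
    then show "f (x + t *\<^sub>R e i) = g (x + t *\<^sub>R e i)" using r assms(3) by blast
  qed (use r in auto)
  then show ?thesis unfolding partial_def by (rule deriv_cong_ev) simp
qed

lemma partial_const: "partial i (\<lambda>_. c) x = 0"
  by (rule partial_eqI[where f'="\<lambda>_. 0"]) auto

lemma dpart_local:
  assumes "open S" "\<And>y. y \<in> S \<Longrightarrow> f y = g y" "x \<in> S"
  shows "dpart is f x = dpart is g x"
  using assms(3)
proof (induction "is" arbitrary: x)
  case Nil then show ?case using assms by simp
next
  case (Cons i "is")
  have "partial i (dpart is f) x = partial i (dpart is g) x"
    by (rule partial_local[OF assms(1) Cons.prems]) (rule Cons.IH)
  then show ?case by simp
qed

lemma dpart_const: "dpart is (\<lambda>_. c) x = (if is = [] then c else 0)"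
proof (induction "is" arbitrary: x)
  case (Cons i "is")
  have "dpart (i # is) (\<lambda>_. c) x = partial i (dpart is (\<lambda>_. c)) x" by simp
  also have "dpart is (\<lambda>_. c) = (\<lambda>_. if is = [] then c else 0)" using Cons by (simp add: fun_eq_iff)
  finally show ?case by (simp add: partial_const)
qed simp

lemma dpart_append: "dpart (is @ js) f = dpart is (dpart js f)"
  by (induction "is") auto

lemma differentiable_on_cong_open:
  assumes "open S" "\<And>y. y \<in> S \<Longrightarrow> f y = g y" "f differentiable_on S"
  shows "g differentiable_on S"
  unfolding differentiable_on_eq_differentiable_at[OF assms(1)]
proof
  fix x assume x: "x \<in> S"
  then obtain f' where "(f has_derivative f') (at x)"
    using assms(3) differentiable_on_eq_differentiable_at[OF assms(1)] differentiable_def by blast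
  then have "(g has_derivative f') (at x)"
    by (rule has_derivative_transform_within_open[OF _ assms(1) x assms(2)])
  then show "g differentiable at x" unfolding differentiable_def by blast
qed


lemma diff_at_open:
  assumes "f differentiable_on S" "open S" "x \<in> S"
  shows "f differentiable (at x)"
  using assms differentiable_on_eq_differentiable_at by blast

lemma partial_sum:
  assumes "finite A" "\<And>a. a \<in> A \<Longrightarrow> f a differentiable (at x)"
  shows "partial i (\<lambda>y. \<Sum>a\<in>A. f a y) x = (\<Sum>a\<in>A. partial i (f a) x)"
proof (rule partial_eqI)
  show "((\<lambda>y. \<Sum>a\<in>A. f a y) has_derivative (\<lambda>h. \<Sum>a\<in>A. frechet_derivative (f a) (at x) h)) (at x)"
    using assms by (intro has_derivative_sum) (auto intro: has_derivative_partial)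
  show "(\<Sum>a\<in>A. frechet_derivative (f a) (at x) (e i)) = (\<Sum>a\<in>A. partial i (f a) x)"
    using assms by (intro sum.cong) (auto simp: partial_frechet)
qed

lemma partial_mult:
  assumes "f differentiable (at x)" "g differentiable (at x)"
  shows "partial i (\<lambda>y. f y * g y) x = f x * partial i g x + partial i f x * g x"
proof (rule partial_eqI)
  show "((\<lambda>y. f y * g y) has_derivative (\<lambda>h. f x * frechet_derivative g (at x) h + frechet_derivative f (at x) h * g x)) (at x)"
    using has_derivative_mult[OF has_derivative_partial[OF assms(1)] has_derivative_partial[OF assms(2)]] .
qed (simp add: partial_frechet assms)

lemma partial_diff:
  assumes "f differentiable (at x)" "g differentiable (at x)"
  shows "partial i (\<lambda>y. f y - g y) x = partial i f x - partial i g x"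
proof (rule partial_eqI)
  show "((\<lambda>y. f y - g y) has_derivative (\<lambda>h. frechet_derivative f (at x) h - frechet_derivative g (at x) h)) (at x)"
    using has_derivative_diff[OF has_derivative_partial[OF assms(1)] has_derivative_partial[OF assms(2)]] .
qed (simp add: partial_frechet assms)

lemma partial_cmult:
  assumes "f differentiable (at x)"
  shows "partial i (\<lambda>y. c * f y) x = c * partial i f x"
  using partial_mult[of "\<lambda>_. c" x f i] assms by (simp add: partial_const)

lemma smooth_dpart_diff: "smooth_on S f \<Longrightarrow> dpart is f differentiable_on S"
  unfolding smooth_on_def by blast

lemma smooth_dpart: "smooth_on S f \<Longrightarrow> smooth_on S (dpart js f)"
  unfolding smooth_on_def by (metis dpart_append)

lemma dpart_sum:
  assumes "open S" "finite A" "\<And>a. a \<in> A \<Longrightarrow> smooth_on S (f a)" "x \<in> S"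
  shows "dpart is (\<lambda>y. \<Sum>a\<in>A. f a y) x = (\<Sum>a\<in>A. dpart is (f a) x)"
  using assms(4)
proof (induction "is" arbitrary: x)
  case Nil then show ?case by simp
next
  case (Cons i "is")
  have "partial i (dpart is (\<lambda>y. \<Sum>a\<in>A. f a y)) x = partial i (\<lambda>y. \<Sum>a\<in>A. dpart is (f a) y) x"
    by (rule partial_local[OF assms(1) Cons.prems]) (rule Cons.IH)
  also have "\<dots> = (\<Sum>a\<in>A. partial i (dpart is (f a)) x)"
    by (rule partial_sum[OF assms(2)]) (use assms Cons.prems diff_at_open smooth_dpart_diff in blast)
  finally show ?case by simp
qed

lemma smooth_sum:
  assumes "open S" "finite A" "\<And>a. a \<in> A \<Longrightarrow> smooth_on S (f a)"
  shows "smooth_on S (\<lambda>y. \<Sum>a\<in>A. f a y)"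
  unfolding smooth_on_def
proof
  fix "is"
  have d: "(\<lambda>y. \<Sum>a\<in>A. dpart is (f a) y) differentiable_on S"
  proof -
    have "\<forall>a\<in>A. dpart is (f a) differentiable_on S" using assms(3) smooth_dpart_diff by blast
    then show ?thesis unfolding differentiable_on_def using assms(2) by (auto intro!: differentiable_sum)
  qed
  show "dpart is (\<lambda>y. \<Sum>a\<in>A. f a y) differentiable_on S"
    by (rule differentiable_on_cong_open[OF assms(1) _ d]) (simp add: dpart_sum[OF assms])
qed

lemma mixed_diff:
  fixes f :: "real^'n::finite \<Rightarrow> real"
  assumes "open S" "f differentiable_on S" "partial i f differentiable_on S"
    "h > 0" "cball x (2*h) \<subseteq> S"
  shows "\<exists>s t. 0 < s \<and> s < h \<and> 0 < t \<and> t < h \<and>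
     f (x + h *\<^sub>R e i + h *\<^sub>R e j) - f (x + h *\<^sub>R e i) - f (x + h *\<^sub>R e j) + f x
       = h^2 * partial j (partial i f) (x + s *\<^sub>R e i + t *\<^sub>R e j)"
proof -
  have inS: "x + a *\<^sub>R e i + b *\<^sub>R e j \<in> S" if "0 \<le> a" "a \<le> h" "0 \<le> b" "b \<le> h" for a b
  proof -
    have "norm (a *\<^sub>R e i + b *\<^sub>R e j) \<le> norm (a *\<^sub>R e i) + norm (b *\<^sub>R e j)"
      by (rule norm_triangle_ineq)
    also have "\<dots> \<le> 2 * h" using that by simp
    moreover have "dist x (x + (a *\<^sub>R e i + b *\<^sub>R e j)) = norm (a *\<^sub>R e i + b *\<^sub>R e j)"
      by (metis dist_commute dist_norm add_diff_cancel_left')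
    ultimately have "dist x (x + a *\<^sub>R e i + b *\<^sub>R e j) \<le> 2 * h"
      by (simp add: add.assoc)
    then show ?thesis using assms(5) by auto
  qed
  have dS: "g differentiable (at y)" if "g differentiable_on S" "y \<in> S" for g y
    using diff_at_open[OF that(1) assms(1) that(2)] .
  define \<phi> where "\<phi> s = f ((x + h *\<^sub>R e j) + s *\<^sub>R e i) - f (x + s *\<^sub>R e i)" for s
  have d\<phi>: "(\<phi> has_real_derivative (partial i f ((x + h *\<^sub>R e j) + s *\<^sub>R e i) - partial i f (x + s *\<^sub>R e i))) (at s)"
    if "0 \<le> s" "s \<le> h" for s
    unfolding \<phi>_def
  proof (intro DERIV_diff line_deriv_partial)
    show "f differentiable at (x + h *\<^sub>R e j + s *\<^sub>R e i)"
      using inS[of s h] that assms(4) dS[OF assms(2)] by (simp add: add_ac)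
    show "f differentiable at (x + s *\<^sub>R e i)"
      using inS[of s 0] that assms(4) dS[OF assms(2)] by simp
  qed
  have "\<exists>s. 0 < s \<and> s < h \<and> \<phi> h - \<phi> 0 = (h - 0) * (partial i f ((x + h *\<^sub>R e j) + s *\<^sub>R e i) - partial i f (x + s *\<^sub>R e i))"
    by (rule MVT2[OF assms(4)]) (rule d\<phi>)
  then obtain s where s: "0 < s" "s < h" "\<phi> h - \<phi> 0 = (h - 0) * (partial i f ((x + h *\<^sub>R e j) + s *\<^sub>R e i) - partial i f (x + s *\<^sub>R e i))"
    by blast
  define \<psi> where "\<psi> t = partial i f ((x + s *\<^sub>R e i) + t *\<^sub>R e j)" for t
  have d\<psi>: "(\<psi> has_real_derivative partial j (partial i f) ((x + s *\<^sub>R e i) + t *\<^sub>R e j)) (at t)"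
    if "0 \<le> t" "t \<le> h" for t
    unfolding \<psi>_def
    by (rule line_deriv_partial) (use inS[of s t] that s dS[OF assms(3)] in simp)
  have "\<exists>t. 0 < t \<and> t < h \<and> \<psi> h - \<psi> 0 = (h - 0) * partial j (partial i f) ((x + s *\<^sub>R e i) + t *\<^sub>R e j)"
    by (rule MVT2[OF assms(4)]) (rule d\<psi>)
  then obtain t where t: "0 < t" "t < h" "\<psi> h - \<psi> 0 = (h - 0) * partial j (partial i f) ((x + s *\<^sub>R e i) + t *\<^sub>R e j)"
    by blast
  have "f (x + h *\<^sub>R e i + h *\<^sub>R e j) - f (x + h *\<^sub>R e i) - f (x + h *\<^sub>R e j) + f x = \<phi> h - \<phi> 0"
    by (simp add: \<phi>_def add_ac)
  also have "\<dots> = h * (\<psi> h - \<psi> 0)"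
    using s(3) by (simp add: \<psi>_def add_ac)
  also have "\<dots> = h^2 * partial j (partial i f) (x + s *\<^sub>R e i + t *\<^sub>R e j)"
    using t(3) by (simp add: power2_eq_square)
  finally show ?thesis using s t by blast
qed


lemma dist_two:
  fixes x :: "real^'n::finite"
  assumes "0 \<le> a" "a \<le> h" "0 \<le> b" "b \<le> h"
  shows "dist (x + a *\<^sub>R e i + b *\<^sub>R e j) x \<le> 2 * h"
proof -
  have "norm (a *\<^sub>R e i + b *\<^sub>R e j) \<le> norm (a *\<^sub>R e i) + norm (b *\<^sub>R e j)"
    by (rule norm_triangle_ineq)
  also have "\<dots> \<le> 2 * h" using assms by simp
  finally show ?thesis by (simp add: dist_norm add.assoc)
qed

lemma smooth_cont:
  assumes "smooth_on S f" "open S" "x \<in> S"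
  shows "isCont (dpart is f) x"
  using smooth_dpart_diff[OF assms(1)] assms(2,3) diff_at_open differentiable_imp_continuous_within
  by blast

lemma abs_aux:
  fixes a c1 c2 :: real
  assumes "\<bar>a - c1\<bar> < \<bar>c1 - c2\<bar> / 2" "\<bar>a - c2\<bar> < \<bar>c1 - c2\<bar> / 2"
  shows False
proof -
  have "\<bar>c1 - c2\<bar> \<le> \<bar>a - c1\<bar> + \<bar>a - c2\<bar>" by (simp add: abs_if)
  moreover have "X \<le> A + B \<Longrightarrow> A < X / 2 \<Longrightarrow> B < X / 2 \<Longrightarrow> False" for X A B :: real
    by linarith
  ultimately show False using assms by blast
qed

lemma schwarz:
  fixes f :: "real^'n::finite \<Rightarrow> real"
  assumes S: "open S" "x \<in> S" "smooth_on S f"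
  shows "partial j (partial i f) x = partial i (partial j f) x"
proof (rule ccontr)
  define c1 where "c1 = partial j (partial i f) x"
  define c2 where "c2 = partial i (partial j f) x"
  assume "partial j (partial i f) x \<noteq> partial i (partial j f) x"
  then have ne: "c1 \<noteq> c2" by (simp add: c1_def c2_def)
  define \<epsilon> where "\<epsilon> = \<bar>c1 - c2\<bar> / 2"
  have \<epsilon>: "\<epsilon> > 0" using ne by (simp add: \<epsilon>_def)
  have fd: "f differentiable_on S" "partial i f differentiable_on S" "partial j f differentiable_on S"
    using smooth_dpart_diff[OF S(3), of "[]"] smooth_dpart_diff[OF S(3), of "[i]"]
      smooth_dpart_diff[OF S(3), of "[j]"] by auto
  have "isCont (partial j (partial i f)) x"
    using smooth_cont[OF S(3,1,2), of "[j,i]"] by simp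
  then obtain d1 where d1: "d1 > 0" "\<And>y. dist y x < d1 \<Longrightarrow> dist (partial j (partial i f) y) c1 < \<epsilon>"
    unfolding continuous_at_eps_delta c1_def using \<epsilon> by blast
  have "isCont (partial i (partial j f)) x"
    using smooth_cont[OF S(3,1,2), of "[i,j]"] by simp
  then obtain d2 where d2: "d2 > 0" "\<And>y. dist y x < d2 \<Longrightarrow> dist (partial i (partial j f) y) c2 < \<epsilon>"
    unfolding continuous_at_eps_delta c2_def using \<epsilon> by blast
  obtain r where r: "r > 0" "cball x r \<subseteq> S" using S(1,2) open_contains_cball by blast
  define h where "h = min (min d1 d2) r / 3"
  have h: "h > 0" "2 * h < d1" "2 * h < d2" "cball x (2*h) \<subseteq> S"
    using d1(1) d2(1) r unfolding h_def by auto
  obtain s t where st: "0 < s" "s < h" "0 < t" "t < h"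
    "f (x + h *\<^sub>R e i + h *\<^sub>R e j) - f (x + h *\<^sub>R e i) - f (x + h *\<^sub>R e j) + f x
       = h^2 * partial j (partial i f) (x + s *\<^sub>R e i + t *\<^sub>R e j)"
    using mixed_diff[OF S(1) fd(1) fd(2) h(1) h(4)] by blast
  obtain s' t' where st': "0 < s'" "s' < h" "0 < t'" "t' < h"
    "f (x + h *\<^sub>R e j + h *\<^sub>R e i) - f (x + h *\<^sub>R e j) - f (x + h *\<^sub>R e i) + f x
       = h^2 * partial i (partial j f) (x + s' *\<^sub>R e j + t' *\<^sub>R e i)"
    using mixed_diff[OF S(1) fd(1) fd(3) h(1) h(4)] by blast
  have "h^2 * partial j (partial i f) (x + s *\<^sub>R e i + t *\<^sub>R e j)
      = h^2 * partial i (partial j f) (x + s' *\<^sub>R e j + t' *\<^sub>R e i)"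
  proof -
    have "f (x + h *\<^sub>R e j + h *\<^sub>R e i) = f (x + h *\<^sub>R e i + h *\<^sub>R e j)" by (simp add: add_ac)
    then show ?thesis using st(5) st'(5) by linarith
  qed
  then have eq: "partial j (partial i f) (x + s *\<^sub>R e i + t *\<^sub>R e j)
      = partial i (partial j f) (x + s' *\<^sub>R e j + t' *\<^sub>R e i)"
    using h(1) by simp
  have "dist (x + s *\<^sub>R e i + t *\<^sub>R e j) x < d1"
    using dist_two[of s h t x i j] st h by linarith
  then have 1: "dist (partial j (partial i f) (x + s *\<^sub>R e i + t *\<^sub>R e j)) c1 < \<epsilon>" by (rule d1(2))
  have "dist (x + s' *\<^sub>R e j + t' *\<^sub>R e i) x < d2"
    using dist_two[of s' h t' x j i] st' h by linarith
  then have 2: "dist (partial i (partial j f) (x + s' *\<^sub>R e j + t' *\<^sub>R e i)) c2 < \<epsilon>" by (rule d2(2))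
  from 1 2 eq show False unfolding \<epsilon>_def dist_real_def using abs_aux by metis
qed

lemma dpart_comm:
  assumes "open S" "smooth_on S f" "x \<in> S"
  shows "dpart (k # is) f x = dpart (is @ [k]) f x"
  using assms(3)
proof (induction "is" arbitrary: x)
  case Nil then show ?case by simp
next
  case (Cons j js)
  have "dpart (k # j # js) f x = partial k (partial j (dpart js f)) x" by simp
  also have "\<dots> = partial j (partial k (dpart js f)) x"
    by (rule schwarz[OF assms(1) Cons.prems smooth_dpart[OF assms(2)]])
  also have "\<dots> = partial j (dpart (js @ [k]) f) x"
    by (rule partial_local[OF assms(1) Cons.prems]) (use Cons.IH in simp)
  finally show ?case by simp
qed

lemma harmonic_dpart:
  assumes "open S" "harmonic_on S p" "x \<in> S"
  shows "lap (dpart is p) x = 0"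
proof -
  have sm: "smooth_on S p" and lp: "\<And>y. y \<in> S \<Longrightarrow> lap p y = 0"
    using assms(2) unfolding harmonic_on_def by auto
  have "lap (dpart is p) x = (\<Sum>k\<in>UNIV. dpart (k # k # is) p x)" by (simp add: lap_def)
  also have "\<dots> = (\<Sum>k\<in>UNIV. dpart is (dpart [k,k] p) x)"
  proof (rule sum.cong[OF refl])
    fix k
    have "dpart (k # k # is) p x = partial k (dpart (k # is) p) x" by simp
    also have "\<dots> = partial k (dpart (is @ [k]) p) x"
      by (rule partial_local[OF assms(1) assms(3)]) (rule dpart_comm[OF assms(1) sm])
    also have "\<dots> = dpart (k # is @ [k]) p x" by simp
    also have "\<dots> = dpart ((is @ [k]) @ [k]) p x" by (rule dpart_comm[OF assms(1) sm assms(3)])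
    also have "\<dots> = dpart is (dpart [k,k] p) x" by (simp add: dpart_append)
    finally show "dpart (k # k # is) p x = dpart is (dpart [k,k] p) x" .
  qed
  also have "\<dots> = dpart is (\<lambda>y. \<Sum>k\<in>UNIV. dpart [k,k] p y) x"
    by (rule dpart_sum[symmetric, OF assms(1) _ _ assms(3)]) (simp, metis dpart.simps(1,2) smooth_dpart[OF sm])
  also have "\<dots> = dpart is (\<lambda>_. 0) x"
    by (rule dpart_local[OF assms(1) _ assms(3)]) (use lp in \<open>simp add: lap_def\<close>)
  also have "\<dots> = 0" by (simp add: dpart_const)
  finally show ?thesis .
qed


lemma int_cs:
  fixes F :: "real^'n::finite \<Rightarrow> real"
  assumes "compact C" "continuous_on C F" "\<And>x. x \<notin> C \<Longrightarrow> F x = 0"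
  shows "integrable lborel F"
proof -
  have "integrable lborel (\<lambda>x. indicator C x *\<^sub>R F x)"
    by (rule borel_integrable_compact[OF assms(1,2)])
  moreover have "(\<lambda>x. indicator C x *\<^sub>R F x) = F"
    using assms(3) by (auto simp: fun_eq_iff indicator_def)
  ultimately show ?thesis by simp
qed

lemma mvt_any:
  fixes f :: "real \<Rightarrow> real"
  assumes "\<And>s. (f has_real_derivative f' s) (at s)" "h \<noteq> 0"
  shows "\<exists>\<sigma>. \<bar>\<sigma>\<bar> < \<bar>h\<bar> \<and> f h - f 0 = h * f' \<sigma>"
proof (cases "h > 0")
  case True
  have "\<exists>z. 0 < z \<and> z < h \<and> f h - f 0 = (h - 0) * f' z"
    by (rule MVT2[OF True]) (rule assms(1))
  then show ?thesis by force
next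
  case False
  then have h: "h < 0" using assms(2) by simp
  have "\<exists>z. h < z \<and> z < 0 \<and> f 0 - f h = (0 - h) * f' z"
    by (rule MVT2[OF h]) (rule assms(1))
  then obtain z where "h < z" "z < 0" "f 0 - f h = (0 - h) * f' z" by blast
  then show ?thesis by (intro exI[of _ z]) (auto simp: algebra_simps)
qed

lemma partial_zero_outside:
  assumes "closed K" "\<And>x. x \<notin> K \<Longrightarrow> g x = 0" "x \<notin> K"
  shows "dpart ks g x = 0"
proof -
  have "dpart ks g x = dpart ks (\<lambda>_. 0) x"
    by (rule dpart_local[of "- K"]) (use assms in auto)
  then show ?thesis by (simp add: dpart_const)
qed

lemma ibp_zero:
  fixes g :: "real^'n::finite \<Rightarrow> real"
  assumes K: "compact K" and zero: "\<And>x. x \<notin> K \<Longrightarrow> g x = 0"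
    and dg: "\<And>x. g differentiable (at x)"
    and cd: "continuous_on UNIV (partial i g)"
  shows "(LINT x|lborel. partial i g x) = 0"
proof -
  define d where "d = partial i g"
  have d0: "d x = 0" if "x \<notin> K" for x
    using partial_zero_outside[OF compact_imp_closed[OF K] zero that, where ks="[i]"] by (simp add: d_def)
  define K' where "K' = {a + b | a b. a \<in> K \<and> b \<in> cball (0::real^'n) 1}"
  define K2 where "K2 = {a + b | a b. a \<in> K \<and> b \<in> cball (0::real^'n) 2}"
  have K': "compact K'" unfolding K'_def by (rule compact_sums[OF K compact_cball])
  have K2: "compact K2" unfolding K2_def by (rule compact_sums[OF K compact_cball])
  have KK': "K \<subseteq> K'" unfolding K'_def by (force intro: exI[of _ 0])
  have gcont: "continuous_on UNIV g"
    using dg by (simp add: continuous_at_imp_continuous_on differentiable_imp_continuous_within)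
  have gmeas: "g \<in> borel_measurable borel" by (rule borel_measurable_continuous_onI[OF gcont])
  have shift0: "g (x + h *\<^sub>R e i) = 0" if "\<bar>h\<bar> \<le> 1" "x \<notin> K'" for x h
  proof (rule ccontr)
    assume "g (x + h *\<^sub>R e i) \<noteq> 0"
    then have "x + h *\<^sub>R e i \<in> K" using zero by blast
    moreover have "- h *\<^sub>R e i \<in> cball 0 1" using that by simp
    ultimately have "(x + h *\<^sub>R e i) + (- h *\<^sub>R e i) \<in> K'" unfolding K'_def by blast
    then show False using that by simp
  qed
  have intg: "integrable lborel g"
    by (rule int_cs[OF K' continuous_on_subset[OF gcont]]) (use zero KK' in auto)
  have intd: "integrable lborel d"
    by (rule int_cs[OF K' continuous_on_subset[OF cd[folded d_def]]]) (use d0 KK' in auto)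
  define D where "D h x = (g (x + h *\<^sub>R e i) - g x) / h" for h x
  have intD: "integrable lborel (D h)" if "\<bar>h\<bar> \<le> 1" for h
  proof (rule int_cs[OF K'])
    have "continuous_on UNIV (\<lambda>x. g (x + h *\<^sub>R e i))"
      by (rule continuous_on_compose2[OF gcont]) (auto intro!: continuous_intros)
    then show "continuous_on K' (D h)" unfolding D_def
      by (cases "h = 0") (auto intro!: continuous_intros continuous_on_subset[OF gcont] intro: continuous_on_subset)
    show "D h x = 0" if "x \<notin> K'" for x
      using shift0[OF \<open>\<bar>h\<bar> \<le> 1\<close> that] zero[of x] that KK' by (auto simp: D_def)
  qed
  have shift: "(LINT x|lborel. g (x + h *\<^sub>R e i)) = (LINT x|lborel. g x)" for h
  proof -
    have "(LINT x|lborel. g x) = integral\<^sup>L (distr lborel borel ((+) (h *\<^sub>R e i))) g"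
      by (simp add: lborel_distr_plus)
    also have "\<dots> = (LINT x|lborel. g (h *\<^sub>R e i + x))"
      by (rule integral_distr) (auto simp: gmeas)
    finally show ?thesis by (simp add: add.commute)
  qed
  have intD0: "(LINT x|lborel. D h x) = 0" if "\<bar>h\<bar> \<le> 1" for h
  proof -
    have i2: "integrable lborel (\<lambda>x. g (x + h *\<^sub>R e i))"
    proof -
      have "(\<lambda>x. g (x + h *\<^sub>R e i)) = (\<lambda>x. h * D h x + g x)"
        by (cases "h = 0") (auto simp: D_def fun_eq_iff)
      then show ?thesis using intD[OF that] intg by simp
    qed
    have "(LINT x|lborel. D h x) = (LINT x|lborel. g (x + h *\<^sub>R e i) - g x) / h"
      unfolding D_def by simp
    also have "\<dots> = 0" using i2 intg shift[of h] by simp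
    finally show ?thesis .
  qed
  have unif: "\<exists>\<delta>>0. \<forall>h. h \<noteq> 0 \<and> \<bar>h\<bar> < \<delta> \<longrightarrow> (\<forall>x. \<bar>D h x - d x\<bar> \<le> \<epsilon>)" if eps: "\<epsilon> > 0" for \<epsilon>
  proof -
    have "uniformly_continuous_on K2 d"
      by (rule compact_uniformly_continuous[OF continuous_on_subset[OF cd[folded d_def]] K2]) simp
    then obtain \<delta> where \<delta>: "\<delta> > 0" "\<And>x y. x \<in> K2 \<Longrightarrow> y \<in> K2 \<Longrightarrow> dist y x < \<delta> \<Longrightarrow> dist (d y) (d x) < \<epsilon>"
      unfolding uniformly_continuous_on_def using eps by blast
    show ?thesis
    proof (intro exI[of _ "min \<delta> 1"] conjI allI impI)
      show "0 < min \<delta> 1" using \<delta> by simp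
      fix h x assume h: "h \<noteq> 0 \<and> \<bar>h\<bar> < min \<delta> 1"
      show "\<bar>D h x - d x\<bar> \<le> \<epsilon>"
      proof (cases "x \<in> K'")
        case False
        then have "x \<notin> K" using KK' by blast
        then show ?thesis using shift0[of h x] zero[of x] d0[of x] False h eps by (auto simp: D_def)
      next
        case True
        have "\<exists>\<sigma>. \<bar>\<sigma>\<bar> < \<bar>h\<bar> \<and> g (x + h *\<^sub>R e i) - g (x + 0 *\<^sub>R e i) = h * d (x + \<sigma> *\<^sub>R e i)"
          by (rule mvt_any[where f="\<lambda>s. g (x + s *\<^sub>R e i)"]) (use h dg in \<open>auto simp: d_def intro!: line_deriv_partial\<close>)
        then obtain \<sigma> where \<sigma>: "\<bar>\<sigma>\<bar> < \<bar>h\<bar>" "g (x + h *\<^sub>R e i) - g x = h * d (x + \<sigma> *\<^sub>R e i)"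
          by auto
        have DD: "D h x = d (x + \<sigma> *\<^sub>R e i)" using \<sigma> h by (simp add: D_def)
        from True obtain a b where ab: "x = a + b" "a \<in> K" "b \<in> cball 0 1" unfolding K'_def by blast
        have xK2: "x \<in> K2" using ab unfolding K2_def by force
        have "b + \<sigma> *\<^sub>R e i \<in> cball 0 2"
        proof -
          have "norm (b + \<sigma> *\<^sub>R e i) \<le> norm b + norm (\<sigma> *\<^sub>R e i)" by (rule norm_triangle_ineq)
          also have "\<dots> \<le> 2" using ab(3) \<sigma> h by simp
          finally show ?thesis by simp
        qed
        moreover have "x + \<sigma> *\<^sub>R e i = a + (b + \<sigma> *\<^sub>R e i)" using ab by (simp add: add.assoc)
        ultimately have yK2: "x + \<sigma> *\<^sub>R e i \<in> K2" using ab unfolding K2_def by blast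
        have "dist (x + \<sigma> *\<^sub>R e i) x < \<delta>" using \<sigma> h by (simp add: dist_norm)
        then have "dist (d (x + \<sigma> *\<^sub>R e i)) (d x) < \<epsilon>" using \<delta>(2)[OF xK2 yK2] by blast
        then show ?thesis using DD by (simp add: dist_real_def)
      qed
    qed
  qed
  have finK': "emeasure lborel K' < \<infinity>" by (rule emeasure_compact_finite[OF K'])
  have K'sets: "K' \<in> sets lborel" using K' by (simp add: compact_imp_closed borel_closed)
  define M where "M = measure lborel K'"
  have M0: "M \<ge> 0" by (simp add: M_def)
  have bound: "\<bar>LINT x|lborel. d x\<bar> \<le> \<epsilon> * M" if pos: "\<epsilon> > 0" for \<epsilon>
  proof -
    obtain \<delta> where \<delta>: "\<delta> > 0" "\<And>h x. h \<noteq> 0 \<Longrightarrow> \<bar>h\<bar> < \<delta> \<Longrightarrow> \<bar>D h x - d x\<bar> \<le> \<epsilon>"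
      using unif[OF pos] by blast
    define h where "h = min \<delta> 1 / 2"
    have h: "h \<noteq> 0" "\<bar>h\<bar> < \<delta>" "\<bar>h\<bar> \<le> 1" using \<delta>(1) by (auto simp: h_def)
    have "(LINT x|lborel. d x) = (LINT x|lborel. d x - D h x)"
      using intD0[OF h(3)] intd intD[OF h(3)] by simp
    also have "\<bar>\<dots>\<bar> \<le> (LINT x|lborel. \<epsilon> * indicator K' x)"
    proof (rule integral_abs_bound_integral)
      show "integrable lborel (\<lambda>x. d x - D h x)" using intd intD[OF h(3)] by simp
      show "integrable lborel (\<lambda>x. \<epsilon> * indicator K' x)"
        using finK' K'sets by simp
      fix x
      show "\<bar>d x - D h x\<bar> \<le> \<epsilon> * indicator K' x"
      proof (cases "x \<in> K'")
        case True then show ?thesis using \<delta>(2)[OF h(1,2), of x] by (simp add: abs_minus_commute)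
      next
        case False
        then have "x \<notin> K" using KK' by blast
        then show ?thesis using shift0[OF h(3) False] zero[of x] d0[of x] False
          by (auto simp: D_def)
      qed
    qed
    also have "\<dots> = \<epsilon> * M" using finK' K'sets by (simp add: M_def)
    finally show ?thesis .
  qed
  show ?thesis
  proof (rule ccontr)
    assume ne: "(LINT x|lborel. partial i g x) \<noteq> 0"
    define I where "I = \<bar>LINT x|lborel. d x\<bar>"
    have I: "I > 0" using ne by (simp add: I_def d_def)
    have "I \<le> (I / (M + 1)) * M" using bound[of "I / (M + 1)"] I M0 by (simp add: I_def)
    also have "\<dots> < I" using I M0 by (simp add: field_simps)
    finally show False by simp
  qed
qed


lemma test_facts:
  assumes "test_function \<Omega> \<phi>"
  shows "compact (closure {x. \<phi> x \<noteq> 0})" "closure {x. \<phi> x \<noteq> 0} \<subseteq> \<Omega>"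
    "smooth_on \<Omega> \<phi>" "\<And>x. x \<notin> closure {x. \<phi> x \<noteq> 0} \<Longrightarrow> dpart ks \<phi> x = 0"
proof -
  show "compact (closure {x. \<phi> x \<noteq> 0})" "closure {x. \<phi> x \<noteq> 0} \<subseteq> \<Omega>" "smooth_on \<Omega> \<phi>"
    using assms unfolding test_function_def by auto
  show "dpart ks \<phi> x = 0" if "x \<notin> closure {x. \<phi> x \<noteq> 0}" for x
  proof (rule partial_zero_outside[OF closed_closure _ that])
    fix y assume y: "y \<notin> closure {x. \<phi> x \<noteq> 0}"
    have "{x. \<phi> x \<noteq> 0} \<subseteq> closure {x. \<phi> x \<noteq> 0}" by (rule closure_subset)
    then show "\<phi> y = 0" using y by auto
  qed
qed

lemma int_test:
  fixes F :: "real^'n::finite \<Rightarrow> real"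
  assumes "test_function \<Omega> \<phi>" "continuous_on \<Omega> F"
    "\<And>x. x \<notin> closure {x. \<phi> x \<noteq> 0} \<Longrightarrow> F x = 0"
  shows "integrable lborel F"
  by (rule int_cs[OF test_facts(1)[OF assms(1)] continuous_on_subset[OF assms(2) test_facts(2)[OF assms(1)]] assms(3)])

lemma green_i:
  fixes u \<phi> :: "real^'n::finite \<Rightarrow> real"
  assumes \<Omega>: "open \<Omega>" and T: "test_function \<Omega> \<phi>"
    and du: "u differentiable_on \<Omega>" and ddu: "partial i u differentiable_on \<Omega>"
    and cu: "continuous_on \<Omega> (partial i (partial i u))"
  shows "(LINT x|lborel. u x * partial i (partial i \<phi>) x) = (LINT x|lborel. partial i (partial i u) x * \<phi> x)"
    "integrable lborel (\<lambda>x. u x * partial i (partial i \<phi>) x)"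
    "integrable lborel (\<lambda>x. partial i (partial i u) x * \<phi> x)"
proof -
  define K where "K = closure {x. \<phi> x \<noteq> 0}"
  have K: "compact K" "K \<subseteq> \<Omega>" and sm: "smooth_on \<Omega> \<phi>"
    and z: "\<And>ks x. x \<notin> K \<Longrightarrow> dpart ks \<phi> x = 0"
    using test_facts[OF T] unfolding K_def by auto
  have z0: "\<phi> x = 0" "partial i \<phi> x = 0" "partial i (partial i \<phi>) x = 0" if "x \<notin> K" for x
    using z[OF that, of "[]"] z[OF that, of "[i]"] z[OF that, of "[i,i]"] by auto
  have dphi: "\<phi> differentiable_on \<Omega>" "partial i \<phi> differentiable_on \<Omega>"
      "partial i (partial i \<phi>) differentiable_on \<Omega>"
    using smooth_dpart_diff[OF sm, of "[]"] smooth_dpart_diff[OF sm, of "[i]"]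
      smooth_dpart_diff[OF sm, of "[i,i]"] by auto
  define g where "g x = u x * partial i \<phi> x - \<phi> x * partial i u x" for x
  have gz: "g x = 0" if "x \<notin> K" for x using z0[OF that] by (simp add: g_def)
  have dg: "g differentiable (at x)" for x
  proof (cases "x \<in> \<Omega>")
    case True
    then show ?thesis unfolding g_def
      using diff_at_open[OF du \<Omega> True] diff_at_open[OF ddu \<Omega> True]
        diff_at_open[OF dphi(1) \<Omega> True] diff_at_open[OF dphi(2) \<Omega> True]
      by (intro differentiable_diff differentiable_mult) auto
  next
    case False
    then have x: "x \<in> - K" using K by blast
    have "((\<lambda>_. 0) has_derivative (\<lambda>_. 0)) (at x)" by simp
    then have "(g has_derivative (\<lambda>_. 0)) (at x)"
      by (rule has_derivative_transform_within_open[OF _ _ x]) (use K gz in \<open>auto simp: compact_imp_closed\<close>)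
    then show ?thesis unfolding differentiable_def by blast
  qed
  have pg: "partial i g x = u x * partial i (partial i \<phi>) x - partial i (partial i u) x * \<phi> x"
    if "x \<in> \<Omega>" for x
  proof -
    have a: "u differentiable (at x)" "partial i u differentiable (at x)"
      "\<phi> differentiable (at x)" "partial i \<phi> differentiable (at x)"
      using diff_at_open[OF du \<Omega> that] diff_at_open[OF ddu \<Omega> that]
        diff_at_open[OF dphi(1) \<Omega> that] diff_at_open[OF dphi(2) \<Omega> that] by auto
    have "partial i g x = partial i (\<lambda>y. u y * partial i \<phi> y) x - partial i (\<lambda>y. \<phi> y * partial i u y) x"
      unfolding g_def using a by (intro partial_diff differentiable_mult) auto
    also have "\<dots> = (u x * partial i (partial i \<phi>) x + partial i u x * partial i \<phi> x)
       - (\<phi> x * partial i (partial i u) x + partial i \<phi> x * partial i u x)"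
      using partial_mult[OF a(1) a(4), of i] partial_mult[OF a(3) a(2), of i] by simp
    finally show ?thesis by (simp add: algebra_simps)
  qed
  have pg0: "partial i g x = 0" if "x \<notin> K" for x
    using partial_zero_outside[OF compact_imp_closed[OF K(1)] gz that, where ks="[i]"] by simp
  define F where "F x = u x * partial i (partial i \<phi>) x - partial i (partial i u) x * \<phi> x" for x
  have pgF: "partial i g x = F x" for x
  proof (cases "x \<in> \<Omega>")
    case True then show ?thesis using pg by (simp add: F_def)
  next
    case False then have "x \<notin> K" using K by blast
    then show ?thesis using pg0 z0 by (simp add: F_def)
  qed
  have cF: "continuous_on \<Omega> F" unfolding F_def
    by (intro continuous_on_diff continuous_on_mult differentiable_imp_continuous_on du dphi cu)
  have cg: "continuous_on UNIV (partial i g)"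
  proof -
    have "continuous_on (\<Omega> \<union> - K) (partial i g)"
    proof (rule continuous_on_open_Un[OF \<Omega>])
      show "open (- K)" using K by (simp add: compact_imp_closed open_Compl)
      show "continuous_on \<Omega> (partial i g)" using cF pgF by simp
      show "continuous_on (- K) (partial i g)"
        using continuous_on_const[of "- K" 0] by (rule continuous_on_eq) (simp add: pg0)
    qed
    moreover have "\<Omega> \<union> - K = UNIV" using K by blast
    ultimately show ?thesis by simp
  qed
  have zero: "(LINT x|lborel. partial i g x) = 0"
    by (rule ibp_zero[OF K(1) gz dg cg]) simp
  show i1: "integrable lborel (\<lambda>x. u x * partial i (partial i \<phi>) x)"
  proof (rule int_test[OF T])
    show "continuous_on \<Omega> (\<lambda>x. u x * partial i (partial i \<phi>) x)"
      by (rule continuous_on_mult[OF differentiable_imp_continuous_on[OF du] differentiable_imp_continuous_on[OF dphi(3)]])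
    show "u x * partial i (partial i \<phi>) x = 0" if "x \<notin> closure {x. \<phi> x \<noteq> 0}" for x
      using z0(3)[of x] that unfolding K_def by simp
  qed
  show i2: "integrable lborel (\<lambda>x. partial i (partial i u) x * \<phi> x)"
  proof (rule int_test[OF T])
    show "continuous_on \<Omega> (\<lambda>x. partial i (partial i u) x * \<phi> x)"
      by (rule continuous_on_mult[OF cu differentiable_imp_continuous_on[OF dphi(1)]])
    show "partial i (partial i u) x * \<phi> x = 0" if "x \<notin> closure {x. \<phi> x \<noteq> 0}" for x
      using z0(1)[of x] that unfolding K_def by simp
  qed
  have "(LINT x|lborel. F x) = 0" using zero pgF by simp
  then show "(LINT x|lborel. u x * partial i (partial i \<phi>) x) = (LINT x|lborel. partial i (partial i u) x * \<phi> x)"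
    using i1 i2 unfolding F_def by simp
qed


lemma green:
  fixes u \<phi> :: "real^'n::finite \<Rightarrow> real"
  assumes \<Omega>: "open \<Omega>" and T: "test_function \<Omega> \<phi>"
    and du: "u differentiable_on \<Omega>" and ddu: "\<And>i. partial i u differentiable_on \<Omega>"
    and cu: "\<And>i. continuous_on \<Omega> (partial i (partial i u))"
  shows "(LINT x|lborel. u x * lap \<phi> x) = (LINT x|lborel. lap u x * \<phi> x)"
proof -
  note g = green_i[OF \<Omega> T du ddu cu]
  have "(LINT x|lborel. u x * lap \<phi> x) = (LINT x|lborel. (\<Sum>i\<in>UNIV. u x * partial i (partial i \<phi>) x))"
    by (simp add: lap_def sum_distrib_left)
  also have "\<dots> = (\<Sum>i\<in>UNIV. LINT x|lborel. u x * partial i (partial i \<phi>) x)"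
    by (rule Bochner_Integration.integral_sum) (rule g(2))
  also have "\<dots> = (\<Sum>i\<in>UNIV. LINT x|lborel. partial i (partial i u) x * \<phi> x)"
    by (rule sum.cong[OF refl]) (rule g(1))
  also have "\<dots> = (LINT x|lborel. (\<Sum>i\<in>UNIV. partial i (partial i u) x * \<phi> x))"
    by (rule Bochner_Integration.integral_sum[symmetric]) (rule g(3))
  also have "\<dots> = (LINT x|lborel. lap u x * \<phi> x)"
    by (simp add: lap_def sum_distrib_right)
  finally show ?thesis .
qed

lemma lap_eq: "lap f = (\<lambda>y. \<Sum>k\<in>UNIV. dpart [k,k] f y)"
  by (simp add: lap_def fun_eq_iff)

lemma test_lap:
  assumes \<Omega>: "open \<Omega>" and T: "test_function \<Omega> \<phi>"
  shows "test_function \<Omega> (lap \<phi>)"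
proof -
  define K where "K = closure {x. \<phi> x \<noteq> 0}"
  have K: "compact K" "K \<subseteq> \<Omega>" and sm: "smooth_on \<Omega> \<phi>"
    and z: "\<And>ks x. x \<notin> K \<Longrightarrow> dpart ks \<phi> x = 0"
    using test_facts[OF T] unfolding K_def by auto
  have smooth: "smooth_on \<Omega> (lap \<phi>)"
    unfolding lap_eq by (rule smooth_sum[OF \<Omega>]) (simp, metis dpart.simps(1,2) smooth_dpart[OF sm])
  have "{x. lap \<phi> x \<noteq> 0} \<subseteq> K"
  proof
    fix x assume "x \<in> {x. lap \<phi> x \<noteq> 0}"
    then have "lap \<phi> x \<noteq> 0" by simp
    then show "x \<in> K" using z unfolding lap_eq by (metis (no_types, lifting) sum.neutral)
  qed
  then have sub: "closure {x. lap \<phi> x \<noteq> 0} \<subseteq> K"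
    by (rule closure_minimal) (simp add: K_def)
  have "compact (K \<inter> closure {x. lap \<phi> x \<noteq> 0})"
    by (rule compact_Int_closed[OF K(1) closed_closure])
  moreover have "K \<inter> closure {x. lap \<phi> x \<noteq> 0} = closure {x. lap \<phi> x \<noteq> 0}" using sub by blast
  ultimately show ?thesis unfolding test_function_def using smooth sub K(2) by auto
qed

lemma test_funpow:
  assumes "open \<Omega>" "test_function \<Omega> \<phi>"
  shows "test_function \<Omega> ((lap ^^ m) \<phi>)"
  by (induction m) (auto intro: test_lap[OF assms(1)] assms(2))


lemma sum_lists_Suc:
  fixes F :: "'a::finite list \<Rightarrow> real"
  shows "(\<Sum>js\<in>{js. length js = Suc m}. F js) = (\<Sum>k\<in>UNIV. \<Sum>is\<in>{is. length is = m}. F (k # is))"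
proof -
  have eq: "{js::'a list. length js = Suc m} = (\<lambda>(k, is). k # is) ` (UNIV \<times> {is. length is = m})"
  proof
    show "{js::'a list. length js = Suc m} \<subseteq> (\<lambda>(k, is). k # is) ` (UNIV \<times> {is. length is = m})"
    proof
      fix js :: "'a list" assume "js \<in> {js. length js = Suc m}"
      then obtain k ks where "js = k # ks" "length ks = m" by (auto simp: length_Suc_conv)
      then show "js \<in> (\<lambda>(k, is). k # is) ` (UNIV \<times> {is. length is = m})" by force
    qed
  qed auto
  have inj: "inj_on (\<lambda>(k, is). k # is) (UNIV \<times> {is::'a list. length is = m})"
    by (auto simp: inj_on_def)
  have "(\<Sum>js\<in>{js. length js = Suc m}. F js) = (\<Sum>(k, is)\<in>UNIV \<times> {is. length is = m}. F (k # is))"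
    unfolding eq by (subst sum.reindex[OF inj]) (simp add: case_prod_unfold)
  also have "\<dots> = (\<Sum>k\<in>UNIV. \<Sum>is\<in>{is. length is = m}. F (k # is))"
    by (rule sum.cartesian_product[symmetric])
  finally show ?thesis .
qed

lemma grad_sq_props:
  fixes p :: "real^'n::finite \<Rightarrow> real"
  assumes \<Omega>: "open \<Omega>" and H: "harmonic_on \<Omega> p"
  shows "grad_sq m p differentiable_on \<Omega>"
    "\<And>k. partial k (grad_sq m p) differentiable_on \<Omega>"
    "\<And>k. continuous_on \<Omega> (partial k (partial k (grad_sq m p)))"
    "\<And>x. x \<in> \<Omega> \<Longrightarrow> lap (grad_sq m p) x = 2 * grad_sq (Suc m) p x"
proof -
  have sm: "smooth_on \<Omega> p" using H by (simp add: harmonic_on_def)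
  define L where "L = {is::'n list. length is = m}"
  have finL: "finite L" using finite_lists_length_eq[of "UNIV::'n set" m] by (simp add: L_def)
  have wd: "dpart is p differentiable_on \<Omega>" for "is" by (rule smooth_dpart_diff[OF sm])
  have wc: "continuous_on \<Omega> (dpart is p)" for "is" by (rule differentiable_imp_continuous_on[OF wd])
  have wdx: "dpart is p differentiable (at x)" if "x \<in> \<Omega>" for "is" x by (rule diff_at_open[OF wd \<Omega> that])
  have wdx1: "partial k (dpart is p) differentiable (at x)" if "x \<in> \<Omega>" for k "is" x
    using wdx[OF that, of "k # is"] by simp
  have gs: "grad_sq m p = (\<lambda>y. \<Sum>is\<in>L. dpart is p y * dpart is p y)"
    by (simp add: grad_sq_def power2_eq_square fun_eq_iff L_def)
  define G1 where "G1 k y = (\<Sum>is\<in>L. 2 * dpart is p y * dpart (k # is) p y)" for k y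
  define G2 where "G2 k y = (\<Sum>is\<in>L. 2 * dpart is p y * dpart (k # k # is) p y
      + 2 * dpart (k # is) p y * dpart (k # is) p y)" for k y
  show "grad_sq m p differentiable_on \<Omega>"
    unfolding gs
    by (rule differentiable_at_imp_differentiable_on)
       (use finL wdx in \<open>auto intro!: differentiable_sum differentiable_mult\<close>)
  have P1: "partial k (grad_sq m p) y = G1 k y" if y: "y \<in> \<Omega>" for k y
  proof -
    have "partial k (grad_sq m p) y = (\<Sum>is\<in>L. partial k (\<lambda>y. dpart is p y * dpart is p y) y)"
      unfolding gs by (rule partial_sum[OF finL]) (use wdx[OF y] in \<open>auto intro!: differentiable_mult\<close>)
    also have "\<dots> = G1 k y" unfolding G1_def
      by (rule sum.cong[OF refl]) (simp add: partial_mult[OF wdx[OF y] wdx[OF y]])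
    finally show ?thesis .
  qed
  have G1d: "G1 k differentiable (at x)" if "x \<in> \<Omega>" for k x
    unfolding G1_def[abs_def] using finL wdx[OF that] wdx1[OF that]
    by (auto intro!: differentiable_sum differentiable_mult)
  show "partial k (grad_sq m p) differentiable_on \<Omega>" for k
  proof (rule differentiable_on_cong_open[OF \<Omega>, of "G1 k"])
    show "G1 k differentiable_on \<Omega>" by (rule differentiable_at_imp_differentiable_on) (rule G1d)
  qed (simp add: P1)
  have P2: "partial k (partial k (grad_sq m p)) x = G2 k x" if x: "x \<in> \<Omega>" for k x
  proof -
    have "partial k (partial k (grad_sq m p)) x = partial k (G1 k) x"
      by (rule partial_local[OF \<Omega> x]) (rule P1)
    also have "\<dots> = (\<Sum>is\<in>L. partial k (\<lambda>y. (2 * dpart is p y) * dpart (k # is) p y) x)"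
      unfolding G1_def[abs_def] by (rule partial_sum[OF finL]) (use wdx[OF x] wdx1[OF x] in \<open>auto intro!: differentiable_mult\<close>)
    also have "\<dots> = G2 k x" unfolding G2_def
    proof (rule sum.cong[OF refl])
      fix "is"
      have c: "(\<lambda>y. 2 * dpart is p y) differentiable (at x)" using wdx[OF x] by (auto intro!: differentiable_mult)
      have "partial k (\<lambda>y. (2 * dpart is p y) * dpart (k # is) p y) x
          = 2 * dpart is p x * partial k (dpart (k # is) p) x + partial k (\<lambda>y. 2 * dpart is p y) x * dpart (k # is) p x"
        using partial_mult[OF c wdx[OF x, of "k # is"], of k] by simp
      also have "partial k (\<lambda>y. 2 * dpart is p y) x = 2 * dpart (k # is) p x"
        using partial_cmult[OF wdx[OF x]] by simp
      finally show "partial k (\<lambda>y. (2 * dpart is p y) * dpart (k # is) p y) x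
        = 2 * dpart is p x * dpart (k # k # is) p x + 2 * dpart (k # is) p x * dpart (k # is) p x"
        by simp
    qed
    finally show ?thesis .
  qed
  show "continuous_on \<Omega> (partial k (partial k (grad_sq m p)))" for k
  proof -
    have "continuous_on \<Omega> (G2 k)" unfolding G2_def[abs_def]
      by (intro continuous_on_sum continuous_on_add continuous_on_mult continuous_on_const wc)
    then show ?thesis using P2 by (simp cong: continuous_on_cong)
  qed
  show "lap (grad_sq m p) x = 2 * grad_sq (Suc m) p x" if x: "x \<in> \<Omega>" for x
  proof -
    have "lap (grad_sq m p) x = (\<Sum>k\<in>UNIV. G2 k x)" using P2[OF x] by (simp add: lap_def)
    also have "\<dots> = (\<Sum>k\<in>UNIV. \<Sum>is\<in>L. 2 * dpart is p x * dpart (k # k # is) p x)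
        + (\<Sum>k\<in>UNIV. \<Sum>is\<in>L. 2 * (dpart (k # is) p x)\<^sup>2)"
      by (simp add: G2_def sum.distrib power2_eq_square mult.assoc)
    also have "(\<Sum>k\<in>UNIV. \<Sum>is\<in>L. 2 * dpart is p x * dpart (k # k # is) p x)
        = (\<Sum>is\<in>L. 2 * dpart is p x * lap (dpart is p) x)"
      by (subst sum.swap) (simp add: lap_def sum_distrib_left)
    also have "\<dots> = 0" using harmonic_dpart[OF \<Omega> H x] by simp
    also have "(\<Sum>k\<in>UNIV. \<Sum>is\<in>L. 2 * (dpart (k # is) p x)\<^sup>2) = 2 * grad_sq (Suc m) p x"
      unfolding grad_sq_def sum_lists_Suc L_def by (simp add: sum_distrib_left)
    finally show ?thesis by simp
  qed
qed


lemma test_zero_outside: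
  assumes "test_function \<Omega> \<phi>" "x \<notin> \<Omega>"
  shows "\<phi> x = 0"
  using test_facts(4)[OF assms(1), of x "[]"] test_facts(2)[OF assms(1)] assms(2) by auto

lemma main_int:
  fixes p :: "real^'n::finite \<Rightarrow> real"
  assumes \<Omega>: "open \<Omega>" and H: "harmonic_on \<Omega> p"
  shows "test_function \<Omega> \<phi> \<Longrightarrow> (LINT x|lborel. grad_sq m p x * \<phi> x)
       = (1 / 2 ^ m) * (LINT x|lborel. (p x)\<^sup>2 * (lap ^^ m) \<phi> x)"
proof (induction m arbitrary: \<phi>)
  case 0
  have "{is::'n list. length is = 0} = {[]}" by auto
  then show ?case by (simp add: grad_sq_def)
next
  case (Suc m)
  note props = grad_sq_props[OF \<Omega> H, where m=m]
  have "(\<lambda>x. grad_sq (Suc m) p x * \<phi> x) = (\<lambda>x. (1/2) * (lap (grad_sq m p) x * \<phi> x))"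
  proof
    fix x show "grad_sq (Suc m) p x * \<phi> x = (1/2) * (lap (grad_sq m p) x * \<phi> x)"
    proof (cases "x \<in> \<Omega>")
      case True then show ?thesis using props(4)[OF True] by simp
    next
      case False then show ?thesis using test_zero_outside[OF Suc.prems False] by simp
    qed
  qed
  then have "(LINT x|lborel. grad_sq (Suc m) p x * \<phi> x) = (1/2) * (LINT x|lborel. lap (grad_sq m p) x * \<phi> x)"
    by simp
  also have "(LINT x|lborel. lap (grad_sq m p) x * \<phi> x) = (LINT x|lborel. grad_sq m p x * lap \<phi> x)"
    by (rule green[OF \<Omega> Suc.prems props(1,2,3), symmetric])
  also have "\<dots> = (1 / 2 ^ m) * (LINT x|lborel. (p x)\<^sup>2 * (lap ^^ m) (lap \<phi>) x)"
    by (rule Suc.IH[OF test_lap[OF \<Omega> Suc.prems]])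
  also have "(lap ^^ m) (lap \<phi>) = (lap ^^ Suc m) \<phi>" by (simp only: funpow_Suc_right comp_def)
  finally show ?case by simp
qed

theorem lemmaA1:
  fixes \<Omega> :: "(real^'n::finite) set" and p \<phi> :: "real^'n \<Rightarrow> real" and m :: nat
  assumes "open \<Omega>" and "L2_on \<Omega> p" and "harmonic_on \<Omega> p" and "test_function \<Omega> \<phi>"
  shows "(LINT x:\<Omega>|lborel. grad_sq m p x * \<phi> x)
       = (1 / 2 ^ m) * (LINT x:\<Omega>|lborel. (p x)\<^sup>2 * (lap ^^ m) \<phi> x)"
proof -
  have T: "test_function \<Omega> ((lap ^^ m) \<phi>)" by (rule test_funpow[OF assms(1,4)])
  have 1: "(\<lambda>x. indicator \<Omega> x *\<^sub>R (grad_sq m p x * \<phi> x)) = (\<lambda>x. grad_sq m p x * \<phi> x)"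
    using test_zero_outside[OF assms(4)] by (auto simp: fun_eq_iff indicator_def)
  have 2: "(\<lambda>x. indicator \<Omega> x *\<^sub>R ((p x)\<^sup>2 * (lap ^^ m) \<phi> x)) = (\<lambda>x. (p x)\<^sup>2 * (lap ^^ m) \<phi> x)"
    using test_zero_outside[OF T] by (auto simp: fun_eq_iff indicator_def)
  show ?thesis
    unfolding set_lebesgue_integral_def 1 2 by (rule main_int[OF assms(1,3,4)])
qed

end
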